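(* Let $f:\mathbb{R}^d\to\mathbb{R}$ be twice differentiable with $f^*:=\sup_\theta f(\theta)$, $f(\theta)<f^*$ for all $\theta$, $L_1$ non-uniform smooth, and satisfying the reversed Łojasiewicz inequality $\|\nabla f(\theta)\|_2\le\nu[f^*-f(\theta)]$ with $\nu>0$. Fix $h\in(0,1)$, $\eta_{\max}>0$ and a point $\theta_t$. Then the exact backtracking procedure from $\eta_{\max}$ with the Armijo condition on the log-loss $$\ln(f^*-f(\theta_t+\eta_t\nabla f(\theta_t)))\le\ln(f^*-f(\theta_t))-h\,\eta_t\frac{\|\nabla f(\theta_t)\|_2^2}{f^*-f(\theta_t)}$$ terminates and returns a step-size $$\eta_t\ge\min\Big\{\eta_{\max},\ \frac{2(1-h)}{L_1\nu\,[f^*-f(\theta_t)]}\Big\}.$$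
   Context: $f$ is $L_1$ non-uniform smooth: $|f(\theta)-f(\theta')-\langle\nabla f(\theta'),\theta-\theta'\rangle|\le\frac{L_1\|\nabla f(\theta')\|_2}{2}\|\theta-\theta'\|_2^2$ for all $\theta,\theta'$. Exact backtracking returns the largest step-size in $(0,\eta_{\max}]$ satisfying the condition. *)

theory Defs
  imports "HOL-Analysis.Analysis"
begin

text \<open>Armijo condition on the log-loss for gradient ascent step \<open>\<theta> + \<eta> \<nabla>f(\<theta>)\<close>;
  \<open>g\<close> is the gradient of \<open>f\<close>.\<close>
definition armijo_log ::
  "('a::real_inner \<Rightarrow> real) \<Rightarrow> ('a \<Rightarrow> 'a) \<Rightarrow> real \<Rightarrow> real \<Rightarrow> 'a \<Rightarrow> real \<Rightarrow> bool" where
  "armijo_log f g fstar h \<theta> \<eta> \<longleftrightarrow>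
     ln (fstar - f (\<theta> + \<eta> *\<^sub>R g \<theta>))
       \<le> ln (fstar - f \<theta>) - h * \<eta> * (norm (g \<theta>))\<^sup>2 / (fstar - f \<theta>)"

definition exact_backtracking_step ::
  "('a::real_inner \<Rightarrow> real) \<Rightarrow> ('a \<Rightarrow> 'a) \<Rightarrow> real \<Rightarrow> real \<Rightarrow> real \<Rightarrow> 'a \<Rightarrow> real \<Rightarrow> bool" where
  "exact_backtracking_step f g fstar h \<eta>max \<theta> \<eta> \<longleftrightarrow>
     \<eta> \<in> {0<..\<eta>max} \<and> armijo_log f g fstar h \<theta> \<eta> \<and>
     (\<forall>\<eta>'\<in>{0<..\<eta>max}. armijo_log f g fstar h \<theta> \<eta>' \<longrightarrow> \<eta>' \<le> \<eta>)"

end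

theory Submission
  imports Defs
begin

theorem lemma2:
  fixes f :: "real ^ 'd \<Rightarrow> real" and g :: "real ^ 'd \<Rightarrow> real ^ 'd"
    and fstar L1 \<nu> h \<eta>max :: real and \<theta>t :: "real ^ 'd"
  assumes grad: "\<And>\<theta>. (f has_derivative (\<lambda>v. g \<theta> \<bullet> v)) (at \<theta>)"
    and twice: "\<And>\<theta>. g differentiable (at \<theta>)"
    and bdd: "bdd_above (range f)"
    and fstar_def: "fstar = (SUP \<theta>. f \<theta>)"
    and below: "\<And>\<theta>. f \<theta> < fstar"
    and smooth: "\<And>\<theta> \<theta>'. \<bar>f \<theta> - f \<theta>' - g \<theta>' \<bullet> (\<theta> - \<theta>')\<bar>
                    \<le> L1 * norm (g \<theta>') / 2 * (norm (\<theta> - \<theta>'))\<^sup>2"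
    and loj: "\<And>\<theta>. norm (g \<theta>) \<le> \<nu> * (fstar - f \<theta>)"
    and \<nu>: "\<nu> > 0"
    and h: "0 < h" "h < 1"
    and \<eta>max: "\<eta>max > 0"
  shows "\<exists>\<eta>. exact_backtracking_step f g fstar h \<eta>max \<theta>t \<eta> \<and>
           \<eta> \<ge> min \<eta>max (2 * (1 - h) / (L1 * \<nu> * (fstar - f \<theta>t)))"
proof -
  define G where "G = g \<theta>t"
  define D where "D = fstar - f \<theta>t"
  define n where "n = norm G"
  have Dpos: "D > 0" using below[of \<theta>t] unfolding D_def by simp
  have n0: "n \<ge> 0" unfolding n_def by simp
  have nD: "n \<le> \<nu> * D" using loj[of \<theta>t] unfolding n_def G_def D_def .
  have L1nn: "L1 \<ge> 0" if "n > 0"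
  proof (rule ccontr)
    assume "\<not> L1 \<ge> 0"
    hence "L1 * n / 2 * n\<^sup>2 < 0" using that by (simp add: mult_neg_pos)
    moreover have "\<bar>f (\<theta>t + G) - f \<theta>t - G \<bullet> (\<theta>t + G - \<theta>t)\<bar> \<le> L1 * n / 2 * n\<^sup>2"
      using smooth[of "\<theta>t + G" \<theta>t] unfolding n_def G_def by simp
    ultimately show False by linarith
  qed
  have key: "armijo_log f g fstar h \<theta>t \<eta>"
    if e0: "\<eta> > 0" and e1: "L1 * \<nu> * D * \<eta> \<le> 2 * (1 - h)" for \<eta>
  proof -
    define D' where "D' = fstar - f (\<theta>t + \<eta> *\<^sub>R G)"
    have D'pos: "D' > 0" using below[of "\<theta>t + \<eta> *\<^sub>R G"] unfolding D'_def by simp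
    have s: "\<bar>f (\<theta>t + \<eta> *\<^sub>R G) - f \<theta>t - G \<bullet> (\<theta>t + \<eta> *\<^sub>R G - \<theta>t)\<bar>
        \<le> L1 * n / 2 * (norm (\<theta>t + \<eta> *\<^sub>R G - \<theta>t))\<^sup>2"
      using smooth[of "\<theta>t + \<eta> *\<^sub>R G" \<theta>t] unfolding n_def G_def by simp
    have i1: "G \<bullet> (\<theta>t + \<eta> *\<^sub>R G - \<theta>t) = \<eta> * n\<^sup>2"
      unfolding n_def by (simp add: power2_norm_eq_inner)
    have i2: "(norm (\<theta>t + \<eta> *\<^sub>R G - \<theta>t))\<^sup>2 = \<eta>\<^sup>2 * n\<^sup>2"
      unfolding n_def using e0 by (simp add: power_mult_distrib)
    have D'le: "D' \<le> D - \<eta> * n\<^sup>2 + L1 * n / 2 * (\<eta>\<^sup>2 * n\<^sup>2)"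
      using s unfolding i1 i2 D'_def D_def by linarith
    show ?thesis
    proof (cases "n = 0")
      case True
      hence "D' \<le> D" using D'le by simp
      hence "ln D' \<le> ln D" using D'pos by simp
      thus ?thesis unfolding armijo_log_def D'_def D_def G_def[symmetric]
        using True by (simp add: n_def)
    next
      case False
      hence npos: "n > 0" using n0 by simp
      have L: "L1 \<ge> 0" using L1nn npos .
      have "L1 * n / 2 * (\<eta>\<^sup>2 * n\<^sup>2) \<le> L1 * (\<nu> * D) / 2 * (\<eta>\<^sup>2 * n\<^sup>2)"
        using L nD by (intro mult_right_mono divide_right_mono mult_left_mono) auto
      also have "\<dots> = (L1 * \<nu> * D * \<eta>) / 2 * (\<eta> * n\<^sup>2)" by (simp add: power2_eq_square)
      also have "\<dots> \<le> (1 - h) * (\<eta> * n\<^sup>2)"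
        using e1 e0 by (intro mult_right_mono) auto
      finally have D'le2: "D' \<le> D - h * \<eta> * n\<^sup>2" using D'le by (simp add: algebra_simps)
      have "ln D' \<le> ln (D - h * \<eta> * n\<^sup>2)" using D'le2 D'pos by simp
      also have "D - h * \<eta> * n\<^sup>2 = D * (1 + (- (h * \<eta> * n\<^sup>2 / D)))"
        using Dpos by (simp add: field_simps)
      also have "ln \<dots> = ln D + ln (1 + (- (h * \<eta> * n\<^sup>2 / D)))"
      proof -
        have "1 + (- (h * \<eta> * n\<^sup>2 / D)) > 0" using Dpos D'pos D'le2 by (simp add: field_simps)
        thus ?thesis using Dpos by (subst ln_mult) auto
      qed
      also have "\<dots> \<le> ln D + (- (h * \<eta> * n\<^sup>2 / D))"
      proof -
        have "1 + (- (h * \<eta> * n\<^sup>2 / D)) > 0" using Dpos D'pos D'le2 by (simp add: field_simps)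
        hence "ln (1 + (- (h * \<eta> * n\<^sup>2 / D))) \<le> - (h * \<eta> * n\<^sup>2 / D)"
          by (intro ln_add_one_self_le_self2) simp
        thus ?thesis by simp
      qed
      finally show ?thesis unfolding armijo_log_def D'_def D_def G_def[symmetric] n_def
        by simp
    qed
  qed
  define \<eta>0 where "\<eta>0 = (if L1 * \<nu> * D \<le> 0 then \<eta>max else min \<eta>max (2 * (1 - h) / (L1 * \<nu> * D)))"
  have e0pos: "\<eta>0 > 0" using \<eta>max h unfolding \<eta>0_def by auto
  have e0le: "\<eta>0 \<le> \<eta>max" unfolding \<eta>0_def by auto
  have e0bound: "\<eta>0 \<ge> min \<eta>max (2 * (1 - h) / (L1 * \<nu> * D))"
    unfolding \<eta>0_def using h by (auto simp: min_def divide_nonneg_neg divide_nonpos_nonneg)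
  have good: "armijo_log f g fstar h \<theta>t \<eta>" if "0 < \<eta>" "\<eta> \<le> \<eta>0" for \<eta>
  proof (rule key[OF that(1)])
    show "L1 * \<nu> * D * \<eta> \<le> 2 * (1 - h)"
    proof (cases "L1 * \<nu> * D \<le> 0")
      case True
      thus ?thesis using that h by (smt (verit) mult_nonpos_nonneg)
    next
      case False
      hence "\<eta> \<le> 2 * (1 - h) / (L1 * \<nu> * D)" using that unfolding \<eta>0_def by auto
      thus ?thesis using False by (simp add: field_simps)
    qed
  qed
  have contf: "continuous_on UNIV f"
    using grad by (meson continuous_at_imp_continuous_on has_derivative_continuous)
  define T where "T = {\<eta>0..\<eta>max} \<inter> {\<eta>. armijo_log f g fstar h \<theta>t \<eta>}"
  have "closed {\<eta>. armijo_log f g fstar h \<theta>t \<eta>}"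
    unfolding armijo_log_def
  proof (rule closed_Collect_le)
    have c1: "continuous_on UNIV (\<lambda>x. f (\<theta>t + x *\<^sub>R g \<theta>t))"
      by (intro continuous_on_compose2[OF contf] continuous_intros) auto
    have c2: "continuous_on UNIV (\<lambda>x. fstar - f (\<theta>t + x *\<^sub>R g \<theta>t))"
      by (intro continuous_intros c1)
    show "continuous_on UNIV (\<lambda>x. ln (fstar - f (\<theta>t + x *\<^sub>R g \<theta>t)))"
      using below by (intro continuous_on_ln c2) (simp add: less_imp_neq[symmetric] )
    show "continuous_on UNIV (\<lambda>x. ln (fstar - f \<theta>t) - h * x * (norm (g \<theta>t))\<^sup>2 / (fstar - f \<theta>t))"
      using Dpos unfolding D_def by (intro continuous_intros) auto
  qed
  hence cT: "compact T" unfolding T_def by (intro compact_Int_closed) auto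
  have neT: "T \<noteq> {}" using good[OF e0pos] e0le unfolding T_def by auto
  obtain \<eta> where eT: "\<eta> \<in> T" and emax: "\<And>y. y \<in> T \<Longrightarrow> y \<le> \<eta>"
    using compact_attains_sup[OF cT neT] by blast
  have "exact_backtracking_step f g fstar h \<eta>max \<theta>t \<eta>"
    unfolding exact_backtracking_step_def
  proof (intro conjI ballI impI)
    show "\<eta> \<in> {0<..\<eta>max}" using eT e0pos unfolding T_def by auto
    show "armijo_log f g fstar h \<theta>t \<eta>" using eT unfolding T_def by auto
    fix y assume y: "y \<in> {0<..\<eta>max}" "armijo_log f g fstar h \<theta>t y"
    show "y \<le> \<eta>"
    proof (cases "y \<ge> \<eta>0")
      case True thus ?thesis using y emax unfolding T_def by auto
    next
      case False thus ?thesis using eT unfolding T_def by auto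
    qed
  qed
  moreover have "\<eta> \<ge> min \<eta>max (2 * (1 - h) / (L1 * \<nu> * (fstar - f \<theta>t)))"
    using eT e0bound unfolding T_def D_def by auto
  ultimately show ?thesis by blast
qed

end
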